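(* Let $R,r>0$ and let $\mathcal{K}^*_{\partial\Omega}$ be the Neumann–Poincaré operator on $K^{-1/2}_0$ for the touching disks $\Omega=B_R\cup B_{-r}$, as described in the context. Then $\mathcal{K}^*_{\partial\Omega}$ has only absolutely continuous spectrum, and its spectrum is $[-1/2,1/2]$.
   Context: Identify $\mathbb{R}^2$ with $\mathbb{C}$; for $a\in\mathbb{R}\setminus\{0\}$ let $B_a$ be the open disk of radius $|a|$ centered at $(a,0)$. Fix $R,r>0$, let $\Omega=B_R\cup B_{-r}$, and put $q_1=\frac1{2r}+\frac1{2R}>0$. For $k\neq0$ let $\mathbb{S}(k)=\frac{1}{2|k|}\mathrm{diag}(1-e^{-|k|q_1},\,1+e^{-|k|q_1})$ and $\mathbb{K}(k)=\frac12e^{-|k|q_1}\mathrm{diag}(1,-1)$. $K^{-1/2}_0$ is the Hilbert space of pairs $\hat\varphi=(\hat\varphi_1,\hat\varphi_2)^T$ of measurable complex functions on $\mathbb{R}$ (mod a.e.) with $\int_{\mathbb{R}}\hat\varphi^T\mathbb{S}\overline{\hat\varphi}\,dk<\infty$, inner product $\langle\psi,\varphi\rangle_{-1/2}=\int_{\mathbb{R}}\hat\psi^T\mathbb{S}\overline{\hat\varphi}\,dk$. (In the paper such a pair represents a boundary density on $\partial\Omega$ via $\varphi=U^{-1}P\hat\varphi$, $P=\frac1{\sqrt2}\begin{bmatrix}-1&1\\1&1\end{bmatrix}$, $U$ the Fourier transform of the density pulled back by $z\mapsto1/z$.) The Neumann–Poincaré operator $\mathcal{K}^*_{\partial\Omega}$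 on $K^{-1/2}_0$ is the multiplication operator $\hat\varphi\mapsto\mathbb{K}\hat\varphi$. *)

theory Defs
  imports "HOL-Analysis.Analysis"
begin

text \<open>Elements of K^{-1/2}_0 are represented by pairs of complex functions on the real
line (k \<mapsto> (phi_1 k, phi_2 k)); the Hilbert space is the set of such representatives
modulo equality almost everywhere (relation np_eq).\<close>

type_synonym pairfun = "real \<Rightarrow> complex \<times> complex"

definition q1 :: "real \<Rightarrow> real \<Rightarrow> real" where
  "q1 R r = 1 / (2 * r) + 1 / (2 * R)"

text \<open>Diagonal entries of the weight matrix S(k) and of the symbol K(k).\<close>
definition S1 :: "real \<Rightarrow> real \<Rightarrow> real \<Rightarrow> real" where
  "S1 R r k = (1 - exp (- \<bar>k\<bar> * q1 R r)) / (2 * \<bar>k\<bar>)"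

definition S2 :: "real \<Rightarrow> real \<Rightarrow> real \<Rightarrow> real" where
  "S2 R r k = (1 + exp (- \<bar>k\<bar> * q1 R r)) / (2 * \<bar>k\<bar>)"

definition K1 :: "real \<Rightarrow> real \<Rightarrow> real \<Rightarrow> real" where
  "K1 R r k = exp (- \<bar>k\<bar> * q1 R r) / 2"

definition K2 :: "real \<Rightarrow> real \<Rightarrow> real \<Rightarrow> real" where
  "K2 R r k = - (exp (- \<bar>k\<bar> * q1 R r) / 2)"

definition ip_integrand :: "real \<Rightarrow> real \<Rightarrow> pairfun \<Rightarrow> pairfun \<Rightarrow> real \<Rightarrow> complex" where
  "ip_integrand R r \<psi> \<phi> k =
     complex_of_real (S1 R r k) * fst (\<psi> k) * cnj (fst (\<phi> k))
   + complex_of_real (S2 R r k) * snd (\<psi> k) * cnj (snd (\<phi> k))"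

definition Kspace :: "real \<Rightarrow> real \<Rightarrow> pairfun set" where
  "Kspace R r = {\<phi>. \<phi> \<in> borel_measurable lebesgue \<and>
     integrable lebesgue (\<lambda>k. S1 R r k * (cmod (fst (\<phi> k)))\<^sup>2 + S2 R r k * (cmod (snd (\<phi> k)))\<^sup>2)}"

definition np_ip :: "real \<Rightarrow> real \<Rightarrow> pairfun \<Rightarrow> pairfun \<Rightarrow> complex" where
  "np_ip R r \<psi> \<phi> = (\<integral>k. ip_integrand R r \<psi> \<phi> k \<partial>lebesgue)"

definition np_norm :: "real \<Rightarrow> real \<Rightarrow> pairfun \<Rightarrow> real" where
  "np_norm R r \<phi> = sqrt (\<integral>k. S1 R r k * (cmod (fst (\<phi> k)))\<^sup>2 + S2 R r k * (cmod (snd (\<phi> k)))\<^sup>2 \<partial>lebesgue)"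

definition np_eq :: "pairfun \<Rightarrow> pairfun \<Rightarrow> bool" where
  "np_eq \<phi> \<psi> \<longleftrightarrow> (AE k in lebesgue. \<phi> k = \<psi> k)"

definition NP_op :: "real \<Rightarrow> real \<Rightarrow> pairfun \<Rightarrow> pairfun" where
  "NP_op R r \<phi> = (\<lambda>k. (complex_of_real (K1 R r k) * fst (\<phi> k),
                        complex_of_real (K2 R r k) * snd (\<phi> k)))"

text \<open>Spectrum of NP_op: z is in the resolvent set iff NP_op - z is a bijection of the
Hilbert space with bounded inverse, i.e. it is bounded below and surjective.\<close>
definition NP_spectrum :: "real \<Rightarrow> real \<Rightarrow> complex set" where
  "NP_spectrum R r = {z. \<not> ((\<exists>c>0. \<forall>\<phi>\<in>Kspace R r.
        c * np_norm R r \<phi> \<le> np_norm R r (\<lambda>k. NP_op R r \<phi> k - (z * fst (\<phi> k), z * snd (\<phi> k))))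
     \<and> (\<forall>\<psi>\<in>Kspace R r. \<exists>\<phi>\<in>Kspace R r.
        np_eq (\<lambda>k. NP_op R r \<phi> k - (z * fst (\<phi> k), z * snd (\<phi> k))) \<psi>))}"

definition is_spectral_measure :: "real \<Rightarrow> real \<Rightarrow> pairfun \<Rightarrow> real measure \<Rightarrow> bool" where
  "is_spectral_measure R r \<phi> \<mu> \<longleftrightarrow> finite_measure \<mu> \<and> sets \<mu> = sets borel \<and>
     (\<forall>n::nat. integrable \<mu> (\<lambda>x. x ^ n) \<and>
        complex_of_real (\<integral>x. x ^ n \<partial>\<mu>) = np_ip R r ((NP_op R r ^^ n) \<phi>) \<phi>)"

definition NP_purely_ac :: "real \<Rightarrow> real \<Rightarrow> bool" where
  "NP_purely_ac R r \<longleftrightarrow> (\<forall>\<phi>\<in>Kspace R r.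
     (\<exists>\<mu>. is_spectral_measure R r \<phi> \<mu>) \<and>
     (\<forall>\<mu>. is_spectral_measure R r \<phi> \<mu> \<longrightarrow> absolutely_continuous lborel \<mu>))"

end

theory Submission
  imports Defs "HOL-Analysis.Analysis"
begin


definition msum :: "'a measure \<Rightarrow> 'a measure \<Rightarrow> 'a measure" where
  "msum M N = measure_of (space M) (sets M) (\<lambda>A. emeasure M A + emeasure N A)"

context
  fixes M N :: "'a measure"
  assumes sN: "sets N = sets M"
begin

lemma sets_msum[simp, measurable_cong]: "sets (msum M N) = sets M"
  unfolding msum_def by (rule sets.sets_measure_of_eq)

lemma space_msum[simp]: "space (msum M N) = space M"
  using sets_eq_imp_space_eq[OF sets_msum] .

lemma space_N: "space N = space M" using sets_eq_imp_space_eq[OF sN] .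

lemma emeasure_msum: assumes "A \<in> sets M"
  shows "emeasure (msum M N) A = emeasure M A + emeasure N A"
  unfolding msum_def
proof (rule emeasure_measure_of_sigma[OF sets.sigma_algebra_axioms _ _ assms])
  show "positive (sets M) (\<lambda>A. emeasure M A + emeasure N A)" by (simp add: positive_def)
  show "countably_additive (sets M) (\<lambda>A. emeasure M A + emeasure N A)"
    unfolding countably_additive_def
  proof safe
    fix A :: "nat \<Rightarrow> 'a set" assume A: "range A \<subseteq> sets M" "disjoint_family A"
    then have A': "range A \<subseteq> sets N" using sN by simp
    have "(\<Sum>i. emeasure M (A i) + emeasure N (A i)) = (\<Sum>i. emeasure M (A i)) + (\<Sum>i. emeasure N (A i))"
      by (rule suminf_add[symmetric]) (auto intro: summableI)
    also have "\<dots> = emeasure M (\<Union>i. A i) + emeasure N (\<Union>i. A i)"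
      using suminf_emeasure[OF A] suminf_emeasure[OF A' A(2)] by simp
    finally show "(\<Sum>i. emeasure M (A i) + emeasure N (A i)) = emeasure M (\<Union> (range A)) + emeasure N (\<Union> (range A))" .
  qed
qed

lemma nn_integral_msum:
  assumes f: "f \<in> borel_measurable M"
  shows "integral\<^sup>N (msum M N) f = integral\<^sup>N M f + integral\<^sup>N N f"
  using f
proof (induction rule: borel_measurable_induct)
  case (cong f g)
  have "integral\<^sup>N (msum M N) f = integral\<^sup>N (msum M N) g" by (intro nn_integral_cong) (simp add: cong)
  moreover have "integral\<^sup>N M f = integral\<^sup>N M g" by (intro nn_integral_cong) (simp add: cong)
  moreover have "integral\<^sup>N N f = integral\<^sup>N N g" by (intro nn_integral_cong) (simp add: cong space_N)
  ultimately show ?case using cong by simp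
next
  case (set A)
  then show ?case using sN by (simp add: emeasure_msum)
next
  case (mult u c)
  have "u \<in> borel_measurable (msum M N)" "u \<in> borel_measurable N"
    using mult by (simp_all add: measurable_cong_sets[OF sN refl])
  then show ?case using mult by (simp add: nn_integral_cmult distrib_left)
next
  case (add u v)
  have "u \<in> borel_measurable (msum M N)" "u \<in> borel_measurable N" "v \<in> borel_measurable (msum M N)" "v \<in> borel_measurable N"
    using add by (simp_all add: measurable_cong_sets[OF sN refl])
  then show ?case using add by (simp add: nn_integral_add add_ac)
next
  case (seq U)
  have m: "U i \<in> borel_measurable (msum M N)" "U i \<in> borel_measurable N" for i
    using seq by (simp_all add: measurable_cong_sets[OF sN refl])
  have incU: "incseq U" using seq by blast
  have inc: "incseq (\<lambda>i. integral\<^sup>N K (U i))" for K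
    using incU by (auto simp: incseq_def le_fun_def intro!: nn_integral_mono)
  have "integral\<^sup>N (msum M N) (Sup (range U)) = (SUP i. integral\<^sup>N (msum M N) (U i))"
    using nn_integral_monotone_convergence_SUP[OF incU m(1)] by (simp add: image_comp Sup_apply[abs_def])
  also have "\<dots> = (SUP i. integral\<^sup>N M (U i) + integral\<^sup>N N (U i))" using seq(5) by simp
  also have "\<dots> = (SUP i. integral\<^sup>N M (U i)) + (SUP i. integral\<^sup>N N (U i))"
    by (rule ennreal_SUP_add[OF inc inc])
  also have "\<dots> = integral\<^sup>N M (Sup (range U)) + integral\<^sup>N N (Sup (range U))"
    using nn_integral_monotone_convergence_SUP[OF incU seq(1)] nn_integral_monotone_convergence_SUP[OF incU m(2)]
    by (simp add: image_comp Sup_apply[abs_def])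
  finally show ?case .
qed

lemma integrable_msum:
  fixes f :: "'a \<Rightarrow> real"
  assumes f: "integrable M f" "integrable N f"
  shows "integrable (msum M N) f" "integral\<^sup>L (msum M N) f = integral\<^sup>L M f + integral\<^sup>L N f"
proof -
  have fm[measurable]: "f \<in> borel_measurable M" using f(1) by auto
  have fm': "f \<in> borel_measurable (msum M N)" by (simp add: measurable_cong_sets[OF sets_msum refl])
  have nn: "(\<integral>\<^sup>+ x. ennreal (g (f x)) \<partial>msum M N) = (\<integral>\<^sup>+ x. ennreal (g (f x)) \<partial>M) + (\<integral>\<^sup>+ x. ennreal (g (f x)) \<partial>N)"
    if "g \<in> borel_measurable borel" for g :: "real \<Rightarrow> real"
  proof -
    have gf[measurable]: "(\<lambda>x. g (f x)) \<in> borel_measurable M" using measurable_compose[OF fm that] by (simp add: comp_def)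
    show ?thesis by (intro nn_integral_msum) measurable
  qed
  have finM: "(\<integral>\<^sup>+ x. ennreal (norm (f x)) \<partial>M) < \<infinity>" and finN: "(\<integral>\<^sup>+ x. ennreal (norm (f x)) \<partial>N) < \<infinity>"
    using f by (auto simp: integrable_iff_bounded)
  show i: "integrable (msum M N) f"
    unfolding integrable_iff_bounded using fm' nn[of norm] finM finN by simp
  have le: "(\<integral>\<^sup>+ x. ennreal (g (f x)) \<partial>K) < \<infinity>"
    if "(\<integral>\<^sup>+ x. ennreal (norm (f x)) \<partial>K) < \<infinity>" "\<And>y. g y \<le> norm y" for g K
    using that(1) by (rule le_less_trans[rotated]) (intro nn_integral_mono ennreal_leI that(2))
  have a: "(\<integral>\<^sup>+ x. ennreal (f x) \<partial>M) < \<infinity>" "(\<integral>\<^sup>+ x. ennreal (f x) \<partial>N) < \<infinity>"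
    using le[OF finM, of "\<lambda>y. y"] le[OF finN, of "\<lambda>y. y"] by auto
  have b: "(\<integral>\<^sup>+ x. ennreal (- f x) \<partial>M) < \<infinity>" "(\<integral>\<^sup>+ x. ennreal (- f x) \<partial>N) < \<infinity>"
    using le[OF finM, of "\<lambda>y. - y"] le[OF finN, of "\<lambda>y. - y"] by auto
  show "integral\<^sup>L (msum M N) f = integral\<^sup>L M f + integral\<^sup>L N f"
    using nn[of "\<lambda>y. y"] nn[of "\<lambda>y. - y"] a b i f
    by (simp add: real_lebesgue_integral_def enn2real_plus)
qed

end


lemma small_eps: fixes d C :: real assumes "\<And>e. 0 < e \<Longrightarrow> \<bar>d\<bar> \<le> e * C" "0 \<le> C" shows "d = 0"
proof (rule ccontr)
  assume "d \<noteq> 0"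
  define e where "e = \<bar>d\<bar> / (2 * (C + 1))"
  have e: "0 < e" using \<open>d \<noteq> 0\<close> assms(2) by (simp add: e_def)
  have "e * C < \<bar>d\<bar>"
  proof -
    have "e * C \<le> e * (C + 1) - e" by (simp add: algebra_simps)
    also have "e * (C + 1) = \<bar>d\<bar> / 2" using assms(2) unfolding e_def by (simp add: field_simps)
    finally show ?thesis using e \<open>d \<noteq> 0\<close> by linarith
  qed
  with assms(1)[OF e] show False by linarith
qed

locale two_meas =
  fixes \<mu> \<nu> :: "real measure"
  assumes fin: "finite_measure \<mu>" "finite_measure \<nu>"
    and sets_eq: "sets \<mu> = sets borel" "sets \<nu> = sets borel"
    and conc: "AE x in \<nu>. \<bar>x\<bar> \<le> 1/2"
    and int_mu: "\<And>n. integrable \<mu> (\<lambda>x. x ^ n)"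
    and int_nu: "\<And>n. integrable \<nu> (\<lambda>x. x ^ n)"
    and mom: "\<And>n. (\<integral>x. x ^ n \<partial>\<mu>) = (\<integral>x. x ^ n \<partial>\<nu>)"
begin

lemma space_eq: "space \<mu> = UNIV" "space \<nu> = UNIV"
  using sets_eq_imp_space_eq[OF sets_eq(1)] sets_eq_imp_space_eq[OF sets_eq(2)] by auto

lemma meas_mu[measurable_cong]: "sets \<mu> = sets borel" and meas_nu[measurable_cong]: "sets \<nu> = sets borel"
  using sets_eq by auto

lemma tail_zero:
  assumes t: "1/2 < t"
  shows "measure \<mu> {x. t \<le> \<bar>x\<bar>} = 0"
proof -
  let ?A = "{x::real. t \<le> \<bar>x\<bar>}"
  have A: "?A \<in> sets \<mu>" unfolding sets_eq by measurable
  have bound: "measure \<mu> ?A \<le> (1 / (2*t)) ^ (2*n) * measure \<nu> UNIV" for n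
  proof -
    have "t ^ (2*n) * measure \<mu> ?A = (\<integral>x. t ^ (2*n) * indicator ?A x \<partial>\<mu>)"
      using A space_eq by simp
    also have "\<dots> \<le> (\<integral>x. x ^ (2*n) \<partial>\<mu>)"
    proof (rule integral_mono)
      show "integrable \<mu> (\<lambda>x. t ^ (2 * n) * indicator ?A x)"
        using A fin(1) by (intro integrable_mult_right finite_measure.integrable_const_bound[where B=1]) (auto simp: indicator_def)
      show "integrable \<mu> (\<lambda>x. x ^ (2 * n))" by (rule int_mu)
      fix x :: real
      show "t ^ (2 * n) * indicator ?A x \<le> x ^ (2 * n)"
      proof (cases "x \<in> ?A")
        case True
        then have "t ^ (2*n) \<le> \<bar>x\<bar> ^ (2*n)" using t by (intro power_mono) auto
        moreover have "\<bar>x\<bar> ^ (2*n) = x ^ (2*n)" by (rule power_even_abs) simp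
        ultimately show ?thesis using True by simp
      next
        case False
        then show ?thesis by (simp add: power_mult)
      qed
    qed
    also have "\<dots> = (\<integral>x. x ^ (2*n) \<partial>\<nu>)" by (rule mom)
    also have "\<dots> \<le> (\<integral>x. (1/2) ^ (2*n) \<partial>\<nu>)"
    proof (rule integral_mono_AE)
      show "integrable \<nu> (\<lambda>x. x ^ (2 * n))" by (rule int_nu)
      show "integrable \<nu> (\<lambda>x. (1/2) ^ (2 * n) :: real)" using fin(2) by (rule finite_measure.integrable_const)
      show "AE x in \<nu>. x ^ (2 * n) \<le> (1/2) ^ (2 * n)"
        using conc
      proof (rule eventually_mono)
        fix x :: real assume "\<bar>x\<bar> \<le> 1/2"
        then have "\<bar>x\<bar> ^ (2*n) \<le> (1/2) ^ (2*n)" by (intro power_mono) auto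
        moreover have "\<bar>x\<bar> ^ (2*n) = x ^ (2*n)" by (rule power_even_abs) simp
        ultimately show "x ^ (2 * n) \<le> (1/2) ^ (2 * n)" by simp
      qed
    qed
    also have "\<dots> = (1/2) ^ (2*n) * measure \<nu> UNIV" using space_eq by simp
    finally have "t ^ (2*n) * measure \<mu> ?A \<le> (1/2) ^ (2*n) * measure \<nu> UNIV" .
    moreover have "(1/2) ^ (2*n) = t ^ (2*n) * (1 / (2*t)) ^ (2*n)"
    proof -
      have e: "t * (1 / (2*t)) = 1/2" using t by simp
      have "t ^ (2*n) * (1 / (2*t)) ^ (2*n) = (t * (1 / (2*t))) ^ (2*n)" by (rule power_mult_distrib[symmetric])
      also have "\<dots> = (1/2) ^ (2*n)" by (simp only: e)
      finally show ?thesis by (rule sym)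
    qed
    ultimately have "t ^ (2*n) * measure \<mu> ?A \<le> t ^ (2*n) * ((1 / (2*t)) ^ (2*n) * measure \<nu> UNIV)"
      by (simp add: mult.assoc)
    moreover have "0 < t ^ (2*n)" using t by simp
    ultimately show ?thesis by (simp add: mult_le_cancel_left_pos)
  qed
  have "(\<lambda>n. (1 / (2*t)) ^ (2*n) * measure \<nu> UNIV) \<longlonglongrightarrow> 0 * measure \<nu> UNIV"
  proof (intro tendsto_mult_right)
    have c0: "0 \<le> 1 / (2*t)" using t by simp
    have c1: "1 / (2*t) < 1" using t by (simp add: divide_less_eq)
    have "(1 / (2*t))^2 < 1" using c0 c1 by (simp add: power_less_one_iff)
    then have "norm ((1 / (2*t))^2) < 1" using c0 by simp
    from LIMSEQ_power_zero[OF this] show "(\<lambda>n. (1 / (2*t)) ^ (2*n)) \<longlonglongrightarrow> 0"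
      by (simp add: power_mult)
  qed
  then have "measure \<mu> ?A \<le> 0" using bound by (intro LIMSEQ_le_const) auto
  then show ?thesis using measure_nonneg[of \<mu> ?A] by linarith
qed

lemma conc_mu: "AE x in \<mu>. \<bar>x\<bar> \<le> 1/2"
proof -
  have "AE x in \<mu>. \<bar>x\<bar> < 1/2 + 1 / Suc m" for m
  proof (rule AE_I')
    let ?A = "{x::real. 1/2 + 1 / Suc m \<le> \<bar>x\<bar>}"
    have A: "?A \<in> sets \<mu>" unfolding sets_eq by measurable
    have "measure \<mu> ?A = 0" by (rule tail_zero) simp
    then show "?A \<in> null_sets \<mu>" using A fin(1) by (simp add: finite_measure.emeasure_eq_measure null_sets_def)
    show "{x \<in> space \<mu>. \<not> \<bar>x\<bar> < 1/2 + 1 / Suc m} \<subseteq> ?A" by auto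
  qed
  then have "AE x in \<mu>. \<forall>m. \<bar>x\<bar> < 1/2 + 1 / Suc m" by (simp add: AE_all_countable)
  then show ?thesis
  proof (rule eventually_mono)
    fix x :: real assume h: "\<forall>m. \<bar>x\<bar> < 1/2 + 1 / Suc m"
    show "\<bar>x\<bar> \<le> 1/2"
    proof (rule ccontr)
      assume "\<not> \<bar>x\<bar> \<le> 1/2"
      then have "0 < \<bar>x\<bar> - 1/2" by simp
      from reals_Archimedean[OF this] obtain m where "inverse (real (Suc m)) < \<bar>x\<bar> - 1/2" by blast
      with h[rule_format, of m] show False by (simp add: inverse_eq_divide)
    qed
  qed
qed

lemma poly_int_eq:
  "(\<integral>x. (\<Sum>i\<le>N. a i * x ^ i) \<partial>\<mu>) = (\<integral>x. (\<Sum>i\<le>N. a i * x ^ i) \<partial>\<nu>)"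
  using int_mu int_nu mom by (simp add: Bochner_Integration.integral_sum)

lemma cont_int_eq:
  fixes f :: "real \<Rightarrow> real"
  assumes cf: "continuous_on UNIV f" and bf: "\<And>x. \<bar>f x\<bar> \<le> B"
  shows "(\<integral>x. f x \<partial>\<mu>) = (\<integral>x. f x \<partial>\<nu>)"
proof -
  have fm[measurable]: "f \<in> borel_measurable borel" using cf by (rule borel_measurable_continuous_onI)
  have fmu: "integrable \<mu> f" using fin(1) bf
    by (intro finite_measure.integrable_const_bound[where B=B]) (auto simp: measurable_cong_sets[OF sets_eq(1) refl])
  have fnu: "integrable \<nu> f" using fin(2) bf
    by (intro finite_measure.integrable_const_bound[where B=B]) (auto simp: measurable_cong_sets[OF sets_eq(2) refl])
  have "\<bar>(\<integral>x. f x \<partial>\<mu>) - (\<integral>x. f x \<partial>\<nu>)\<bar> \<le> e * (measure \<mu> UNIV + measure \<nu> UNIV)" if e: "0 < e" for e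
  proof -
    obtain g where g: "real_polynomial_function g" "\<And>x. x \<in> {-1/2..1/2} \<Longrightarrow> \<bar>f x - g x\<bar> < e"
      using Stone_Weierstrass_real_polynomial_function[of "{-1/2..1/2::real}" f e] e
        continuous_on_subset[OF cf] by auto
    obtain a N where gN: "g = (\<lambda>x. \<Sum>i\<le>N. a i * x ^ i)"
      using g(1) real_polynomial_function_iff_sum by blast
    have gmu: "integrable \<mu> g" and gnu: "integrable \<nu> g" unfolding gN using int_mu int_nu by auto
    have est: "\<bar>(\<integral>x. f x \<partial>M) - (\<integral>x. g x \<partial>M)\<bar> \<le> e * measure M UNIV"
      if fM: "integrable M f" and gM: "integrable M g" and cM: "AE x in M. \<bar>x\<bar> \<le> 1/2" and sM: "space M = UNIV"
        and finM: "finite_measure M" for M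
    proof -
      have "\<bar>(\<integral>x. f x \<partial>M) - (\<integral>x. g x \<partial>M)\<bar> = \<bar>\<integral>x. f x - g x \<partial>M\<bar>"
        using fM gM by simp
      also have "\<dots> \<le> (\<integral>x. \<bar>f x - g x\<bar> \<partial>M)" by (rule integral_abs_bound)
      also have "\<dots> \<le> (\<integral>x. e \<partial>M)"
      proof (rule integral_mono_AE)
        show "integrable M (\<lambda>x. \<bar>f x - g x\<bar>)" using fM gM by auto
        show "integrable M (\<lambda>x. e)" using finM by (rule finite_measure.integrable_const)
        show "AE x in M. \<bar>f x - g x\<bar> \<le> e" using cM
        proof (rule eventually_mono)
          fix x :: real assume "\<bar>x\<bar> \<le> 1/2"
          then have "x \<in> {-1/2..1/2}" by (auto simp: abs_le_iff)
          from g(2)[OF this] show "\<bar>f x - g x\<bar> \<le> e" by simp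
        qed
      qed
      also have "\<dots> = e * measure M UNIV" using sM by simp
      finally show ?thesis .
    qed
    have e1: "\<bar>(\<integral>x. f x \<partial>\<mu>) - (\<integral>x. g x \<partial>\<mu>)\<bar> \<le> e * measure \<mu> UNIV"
      by (rule est[OF fmu gmu conc_mu space_eq(1) fin(1)])
    have e2: "\<bar>(\<integral>x. f x \<partial>\<nu>) - (\<integral>x. g x \<partial>\<nu>)\<bar> \<le> e * measure \<nu> UNIV"
      by (rule est[OF fnu gnu conc space_eq(2) fin(2)])
    have "(\<integral>x. g x \<partial>\<mu>) = (\<integral>x. g x \<partial>\<nu>)" unfolding gN by (rule poly_int_eq)
    with e1 e2 show ?thesis by (simp add: algebra_simps)
  qed
  then show ?thesis using small_eps[of "(\<integral>x. f x \<partial>\<mu>) - (\<integral>x. f x \<partial>\<nu>)" "measure \<mu> UNIV + measure \<nu> UNIV"]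
    by (simp add: add_nonneg_nonneg)
qed

lemma Ioi_eq: "measure \<mu> {a<..} = measure \<nu> {a<..}"
proof -
  define s where "s n x = max 0 (min 1 (real (Suc n) * (x - a)))" for n x
  have sc: "continuous_on UNIV (s n)" for n unfolding s_def by (intro continuous_intros)
  have sb: "\<bar>s n x\<bar> \<le> 1" for n x unfolding s_def by auto
  have sm[measurable]: "s n \<in> borel_measurable borel" for n unfolding s_def by measurable
  have lim: "(\<lambda>n. s n x) \<longlonglongrightarrow> indicator {a<..} x" for x
  proof (cases "a < x")
    case True
    obtain N where N: "inverse (real (Suc N)) < x - a" using reals_Archimedean True by (metis diff_gt_0_iff_gt)
    have "s n x = 1" if "n \<ge> N" for n
    proof -
      from N have "1 < real (Suc N) * (x - a)" by (simp add: field_simps inverse_eq_divide)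
      also have "\<dots> \<le> real (Suc n) * (x - a)" using that True by (intro mult_right_mono) auto
      finally have "1 < real (Suc n) * (x - a)" .
      then show ?thesis by (simp add: s_def)
    qed
    then have "eventually (\<lambda>n. s n x = indicator {a<..} x) sequentially"
      using True by (auto simp: eventually_sequentially)
    then show ?thesis by (rule tendsto_eventually[THEN tendsto_cong[THEN iffD1, rotated]]) (simp add: eventually_mono)
  next
    case False
    have "s n x = 0" for n
    proof -
      have "real (Suc n) * (x - a) \<le> 0" using False by (intro mult_nonneg_nonpos) auto
      then show ?thesis by (simp add: s_def)
    qed
    then show ?thesis using False by simp
  qed
  have conv: "(\<lambda>n. \<integral>x. s n x \<partial>M) \<longlonglongrightarrow> measure M {a<..}"
    if finM: "finite_measure M" and sM: "sets M = sets borel" for M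
  proof -
    have sp: "space M = UNIV" using sets_eq_imp_space_eq[OF sM] by simp
    have "(\<lambda>n. \<integral>x. s n x \<partial>M) \<longlonglongrightarrow> (\<integral>x. indicator {a<..} x \<partial>M)"
    proof (rule integral_dominated_convergence[where w="\<lambda>_. 1"])
      show "indicat_real {a<..} \<in> borel_measurable M" using sM by (simp add: measurable_cong_sets[OF sM refl])
      show "s n \<in> borel_measurable M" for n using sM by (simp add: measurable_cong_sets[OF sM refl])
      show "integrable M (\<lambda>_. 1::real)" using finM by (rule finite_measure.integrable_const)
      show "AE x in M. (\<lambda>n. s n x) \<longlonglongrightarrow> indicator {a<..} x" using lim by simp
      show "AE x in M. norm (s n x) \<le> 1" for n using sb by simp
    qed
    then show ?thesis using sp by simp
  qed
  have "(\<lambda>n. \<integral>x. s n x \<partial>\<mu>) = (\<lambda>n. \<integral>x. s n x \<partial>\<nu>)"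
    using cont_int_eq[OF sc sb] by simp
  then show ?thesis using conv[OF fin(1) sets_eq(1)] conv[OF fin(2) sets_eq(2)]
    by (metis LIMSEQ_unique)
qed

lemma meas_eq: "\<mu> = \<nu>"
proof (rule measure_eqI_lessThan[OF sets_eq])
  fix x :: real
  show "emeasure \<mu> {x<..} < \<infinity>" using finite_measure.emeasure_finite[OF fin(1)] by (simp add: less_top[symmetric])
  show "emeasure \<mu> {x<..} = emeasure \<nu> {x<..}"
    using Ioi_eq[of x] fin by (simp add: finite_measure.emeasure_eq_measure)
qed
end

lemma borel_to_leb: "f \<in> borel_measurable borel \<Longrightarrow> f \<in> borel_measurable lebesgue"
  by (rule measurable_completion) simp

lemma q1_pos: "R > 0 \<Longrightarrow> r > 0 \<Longrightarrow> q1 R r > 0"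
  unfolding q1_def by (simp add: add_pos_pos)

lemma meas_basic[measurable]:
  "S1 R r \<in> borel_measurable borel" "S2 R r \<in> borel_measurable borel"
  "K1 R r \<in> borel_measurable borel" "K2 R r \<in> borel_measurable borel"
  unfolding S1_def S2_def K1_def K2_def by measurable

lemma meas_basic_leb[measurable]:
  "S1 R r \<in> borel_measurable lebesgue" "S2 R r \<in> borel_measurable lebesgue"
  "K1 R r \<in> borel_measurable lebesgue" "K2 R r \<in> borel_measurable lebesgue"
  using meas_basic by (auto intro!: measurable_completion)

lemma K2_eq: "K2 R r k = - K1 R r k" by (simp add: K1_def K2_def)

lemma K1_bounds: assumes "0 < q1 R r" shows "0 < K1 R r k" "K1 R r k \<le> 1/2"
  using assms by (auto simp: K1_def mult_nonneg_nonneg)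

lemma S1_nonneg: assumes "0 < q1 R r" shows "0 \<le> S1 R r k"
  using assms by (auto simp: S1_def intro!: divide_nonneg_nonneg simp: mult_nonneg_nonneg)

lemma S1_le_S2: assumes "0 < q1 R r" shows "S1 R r k \<le> S2 R r k"
  using assms by (auto simp: S1_def S2_def intro!: divide_right_mono)

lemma S2_nonneg: assumes "0 < q1 R r" shows "0 \<le> S2 R r k"
  using S1_nonneg[OF assms] S1_le_S2[OF assms] by (rule order_trans)

lemma NP_pow: "(NP_op R r ^^ n) \<phi> = (\<lambda>k. (complex_of_real (K1 R r k ^ n) * fst (\<phi> k), complex_of_real (K2 R r k ^ n) * snd (\<phi> k)))"
  by (induction n) (auto simp: NP_op_def fun_eq_iff)

lemma fst_meas[measurable (raw)]: "\<phi> \<in> borel_measurable M \<Longrightarrow> (\<lambda>x. fst (\<phi> x :: complex \<times> complex)) \<in> borel_measurable M"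
  by (rule borel_measurable_continuous_on[OF continuous_on_fst[OF continuous_on_id]])
lemma snd_meas[measurable (raw)]: "\<phi> \<in> borel_measurable M \<Longrightarrow> (\<lambda>x. snd (\<phi> x :: complex \<times> complex)) \<in> borel_measurable M"
  by (rule borel_measurable_continuous_on[OF continuous_on_snd[OF continuous_on_id]])

definition wn :: "real \<Rightarrow> real \<Rightarrow> pairfun \<Rightarrow> real \<Rightarrow> real" where
  "wn R r \<phi> k = S1 R r k * (cmod (fst (\<phi> k)))\<^sup>2 + S2 R r k * (cmod (snd (\<phi> k)))\<^sup>2"

lemma Kspace_iff: "\<phi> \<in> Kspace R r \<longleftrightarrow> \<phi> \<in> borel_measurable lebesgue \<and> integrable lebesgue (wn R r \<phi>)"
  by (simp add: Kspace_def wn_def[abs_def])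

lemma np_norm_wn: "np_norm R r \<phi> = sqrt (integral\<^sup>L lebesgue (wn R r \<phi>))"
  by (simp add: np_norm_def wn_def[abs_def])

lemma wn_nonneg: "0 < q1 R r \<Longrightarrow> 0 \<le> wn R r \<phi> k"
  unfolding wn_def using S1_nonneg S2_nonneg by (intro add_nonneg_nonneg mult_nonneg_nonneg) auto

lemma Kspace_parts:
  assumes q: "0 < q1 R r" and "\<phi> \<in> Kspace R r"
  shows "integrable lebesgue (\<lambda>k. S1 R r k * (cmod (fst (\<phi> k)))\<^sup>2)"
        "integrable lebesgue (\<lambda>k. S2 R r k * (cmod (snd (\<phi> k)))\<^sup>2)"
proof -
  have m[measurable]: "\<phi> \<in> borel_measurable lebesgue" and i: "integrable lebesgue (wn R r \<phi>)"
    using assms by (auto simp: Kspace_iff)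
  show "integrable lebesgue (\<lambda>k. S1 R r k * (cmod (fst (\<phi> k)))\<^sup>2)"
    by (rule Bochner_Integration.integrable_bound[OF i]) 
       (auto intro!: AE_I2 simp: wn_def abs_of_nonneg S1_nonneg[OF q] S2_nonneg[OF q])
  show "integrable lebesgue (\<lambda>k. S2 R r k * (cmod (snd (\<phi> k)))\<^sup>2)"
    by (rule Bochner_Integration.integrable_bound[OF i]) 
       (auto intro!: AE_I2 simp: wn_def abs_of_nonneg S1_nonneg[OF q] S2_nonneg[OF q])
qed

lemma Kspace_mult:
  assumes q: "0 < q1 R r" and phi: "\<phi> \<in> Kspace R r"
    and am[measurable]: "a \<in> borel_measurable lebesgue" and bm[measurable]: "b \<in> borel_measurable lebesgue"
    and ab: "\<And>k. cmod (a k) \<le> C" "\<And>k. cmod (b k) \<le> C"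
  defines "\<psi> \<equiv> (\<lambda>k. (a k * fst (\<phi> k), b k * snd (\<phi> k)))"
  shows "\<psi> \<in> Kspace R r" "\<And>k. wn R r \<psi> k \<le> C\<^sup>2 * wn R r \<phi> k"
proof -
  have m[measurable]: "\<phi> \<in> borel_measurable lebesgue" and i: "integrable lebesgue (wn R r \<phi>)"
    using phi by (auto simp: Kspace_iff)
  have C: "0 \<le> C" using ab(1)[of 0] norm_ge_zero[of "a 0"] by linarith
  show bnd: "wn R r \<psi> k \<le> C\<^sup>2 * wn R r \<phi> k" for k
  proof -
    have "(cmod (a k * fst (\<phi> k)))\<^sup>2 \<le> C\<^sup>2 * (cmod (fst (\<phi> k)))\<^sup>2"
      unfolding norm_mult power_mult_distrib
      by (intro mult_right_mono power_mono ab) auto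
    moreover have "(cmod (b k * snd (\<phi> k)))\<^sup>2 \<le> C\<^sup>2 * (cmod (snd (\<phi> k)))\<^sup>2"
      unfolding norm_mult power_mult_distrib
      by (intro mult_right_mono power_mono ab) auto
    ultimately have "S1 R r k * (cmod (a k * fst (\<phi> k)))\<^sup>2 + S2 R r k * (cmod (b k * snd (\<phi> k)))\<^sup>2
       \<le> S1 R r k * (C\<^sup>2 * (cmod (fst (\<phi> k)))\<^sup>2) + S2 R r k * (C\<^sup>2 * (cmod (snd (\<phi> k)))\<^sup>2)"
      by (intro add_mono mult_left_mono S1_nonneg[OF q] S2_nonneg[OF q])
    then show ?thesis by (simp add: wn_def \<psi>_def algebra_simps)
  qed
  have pm: "\<psi> \<in> borel_measurable lebesgue" unfolding \<psi>_def by measurable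
  moreover have "integrable lebesgue (wn R r \<psi>)"
  proof (rule Bochner_Integration.integrable_bound[where f="\<lambda>k. C\<^sup>2 * wn R r \<phi> k"])
    show "integrable lebesgue (\<lambda>k. C\<^sup>2 * wn R r \<phi> k)" using i by simp
    show "wn R r \<psi> \<in> borel_measurable lebesgue" unfolding wn_def[abs_def] using pm by measurable
    show "AE x in lebesgue. norm (wn R r \<psi> x) \<le> norm (C\<^sup>2 * wn R r \<phi> x)"
      using bnd wn_nonneg[OF q] by (auto intro!: AE_I2 simp: abs_of_nonneg)
  qed
  ultimately show "\<psi> \<in> Kspace R r" by (simp add: Kspace_iff)
qed

lemma sep_I:
  assumes "z \<notin> complex_of_real ` {-1/2..1/2}"
  obtains c where "c > 0" "\<And>x. x \<in> {-1/2..1/2} \<Longrightarrow> c \<le> cmod (complex_of_real x - z)"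
proof -
  have "compact (complex_of_real ` {-1/2..1/2})"
    by (intro compact_continuous_image continuous_intros) auto
  then have "closed (complex_of_real ` {-1/2..1/2})" by (rule compact_imp_closed)
  from separate_point_closed[OF this assms] obtain d where "d > 0" "\<forall>x\<in>complex_of_real ` {-1/2..1/2}. d \<le> dist z x" by blast
  then show ?thesis by (intro that[of d]) (auto simp: dist_norm norm_minus_commute)
qed

lemma NP_minus: "(\<lambda>k. NP_op R r \<phi> k - (z * fst (\<phi> k), z * snd (\<phi> k)))
   = (\<lambda>k. ((complex_of_real (K1 R r k) - z) * fst (\<phi> k), (complex_of_real (K2 R r k) - z) * snd (\<phi> k)))"
  by (simp add: NP_op_def fun_eq_iff algebra_simps)

lemma K_in_I: assumes "0 < q1 R r" shows "K1 R r k \<in> {-1/2..1/2}" "K2 R r k \<in> {-1/2..1/2}"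
  using K1_bounds[OF assms, of k] by (auto simp: K2_eq)

lemma resolvent:
  assumes q: "0 < q1 R r" and z: "z \<notin> complex_of_real ` {-1/2..1/2}"
  shows "z \<notin> NP_spectrum R r"
proof -
  obtain c where c: "c > 0" "\<And>x. x \<in> {-1/2..1/2} \<Longrightarrow> c \<le> cmod (complex_of_real x - z)"
    using sep_I[OF z] by blast
  have c1: "c \<le> cmod (complex_of_real (K1 R r k) - z)" and c2: "c \<le> cmod (complex_of_real (K2 R r k) - z)" for k
    using c(2) K_in_I[OF q] by auto
  have ub1: "cmod (complex_of_real (K1 R r k) - z) \<le> 1/2 + cmod z" and ub2: "cmod (complex_of_real (K2 R r k) - z) \<le> 1/2 + cmod z" for k
    using K_in_I[OF q, of k] norm_triangle_ineq4[of "complex_of_real (K1 R r k)" z] norm_triangle_ineq4[of "complex_of_real (K2 R r k)" z]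
    by auto
  have bb: "c * np_norm R r \<phi> \<le> np_norm R r (\<lambda>k. NP_op R r \<phi> k - (z * fst (\<phi> k), z * snd (\<phi> k)))"
    if phi: "\<phi> \<in> Kspace R r" for \<phi>
  proof -
    define \<psi> where "\<psi> = (\<lambda>k. ((complex_of_real (K1 R r k) - z) * fst (\<phi> k), (complex_of_real (K2 R r k) - z) * snd (\<phi> k)))"
    have psi: "\<psi> \<in> Kspace R r"
      unfolding \<psi>_def by (rule Kspace_mult[OF q phi _ _ ub1 ub2]) measurable
    have iphi: "integrable lebesgue (wn R r \<phi>)" and ipsi: "integrable lebesgue (wn R r \<psi>)"
      using phi psi by (auto simp: Kspace_iff)
    have pw: "c\<^sup>2 * wn R r \<phi> k \<le> wn R r \<psi> k" for k
    proof -
      have "c\<^sup>2 * (cmod (fst (\<phi> k)))\<^sup>2 \<le> (cmod ((complex_of_real (K1 R r k) - z) * fst (\<phi> k)))\<^sup>2"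
        unfolding norm_mult power_mult_distrib using c(1) c1[of k]
        by (intro mult_right_mono power_mono) auto
      moreover have "c\<^sup>2 * (cmod (snd (\<phi> k)))\<^sup>2 \<le> (cmod ((complex_of_real (K2 R r k) - z) * snd (\<phi> k)))\<^sup>2"
        unfolding norm_mult power_mult_distrib using c(1) c2[of k]
        by (intro mult_right_mono power_mono) auto
      ultimately have "S1 R r k * (c\<^sup>2 * (cmod (fst (\<phi> k)))\<^sup>2) + S2 R r k * (c\<^sup>2 * (cmod (snd (\<phi> k)))\<^sup>2)
        \<le> S1 R r k * (cmod ((complex_of_real (K1 R r k) - z) * fst (\<phi> k)))\<^sup>2 + S2 R r k * (cmod ((complex_of_real (K2 R r k) - z) * snd (\<phi> k)))\<^sup>2"
        by (intro add_mono mult_left_mono S1_nonneg[OF q] S2_nonneg[OF q])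
      then show ?thesis by (simp add: wn_def \<psi>_def algebra_simps)
    qed
    have "c\<^sup>2 * integral\<^sup>L lebesgue (wn R r \<phi>) \<le> integral\<^sup>L lebesgue (wn R r \<psi>)"
      using integral_mono[OF integrable_mult_right[OF iphi, of "c\<^sup>2"] ipsi pw] by simp
    then have "sqrt (c\<^sup>2 * integral\<^sup>L lebesgue (wn R r \<phi>)) \<le> sqrt (integral\<^sup>L lebesgue (wn R r \<psi>))"
      by (rule real_sqrt_le_mono)
    then show ?thesis using c(1) by (simp add: np_norm_wn NP_minus \<psi>_def[symmetric] real_sqrt_mult)
  qed
  have sj: "\<exists>\<phi>\<in>Kspace R r. np_eq (\<lambda>k. NP_op R r \<phi> k - (z * fst (\<phi> k), z * snd (\<phi> k))) \<psi>"
    if psi: "\<psi> \<in> Kspace R r" for \<psi>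
  proof -
    define \<phi> where "\<phi> = (\<lambda>k. (inverse (complex_of_real (K1 R r k) - z) * fst (\<psi> k), inverse (complex_of_real (K2 R r k) - z) * snd (\<psi> k)))"
    have ne1: "complex_of_real (K1 R r k) - z \<noteq> 0" and ne2: "complex_of_real (K2 R r k) - z \<noteq> 0" for k
      using c1[of k] c2[of k] c(1) by auto
    have "\<phi> \<in> Kspace R r"
      unfolding \<phi>_def
    proof (rule Kspace_mult[OF q psi, where C="1/c"])
      show "cmod (inverse (complex_of_real (K1 R r k) - z)) \<le> 1 / c" for k
        using le_imp_inverse_le[OF c1[of k] c(1)] by (simp add: norm_inverse inverse_eq_divide norm_divide)
      show "cmod (inverse (complex_of_real (K2 R r k) - z)) \<le> 1 / c" for k
        using le_imp_inverse_le[OF c2[of k] c(1)] by (simp add: norm_inverse inverse_eq_divide norm_divide)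
    qed measurable
    moreover have "(\<lambda>k. NP_op R r \<phi> k - (z * fst (\<phi> k), z * snd (\<phi> k))) = \<psi>"
    proof -
      have id1: "(complex_of_real (K1 R r k) - z) * (inverse (complex_of_real (K1 R r k) - z) * a) = a"
      and id2: "(complex_of_real (K2 R r k) - z) * (inverse (complex_of_real (K2 R r k) - z) * a) = a" for k a
        using ne1[of k] ne2[of k] by (simp_all add: mult.assoc[symmetric])
      show ?thesis unfolding NP_minus \<phi>_def by (simp only: fst_conv snd_conv id1 id2 prod.collapse)
    qed
    ultimately show ?thesis by (auto simp: np_eq_def)
  qed
  show ?thesis unfolding NP_spectrum_def using bb sj c(1) by blast
qed

lemma exp_diff_le: fixes u v :: real assumes "0 \<le> u" "u \<le> v" shows "exp (- u) - exp (- v) \<le> v - u"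
proof -
  have "1 - exp (-(v-u)) \<le> v - u" using exp_ge_add_one_self[of "-(v-u)"] by linarith
  moreover have "0 \<le> 1 - exp (-(v-u))" using assms by simp
  moreover have "exp (-u) \<le> 1" using assms by simp
  ultimately have "exp (-u) * (1 - exp (-(v-u))) \<le> 1 * (v - u)"
    by (intro mult_mono) auto
  moreover have "exp (-u) * (1 - exp (-(v-u))) = exp (-u) - exp (-v)"
    by (simp add: algebra_simps flip: exp_add)
  ultimately show ?thesis by simp
qed

lemma K1_lip: assumes q: "0 < q1 R r" and "0 \<le> x" "x \<le> y"
  shows "\<bar>K1 R r x - K1 R r y\<bar> \<le> (y - x) * q1 R r / 2"
proof -
  have "exp (- (x * q1 R r)) - exp (- (y * q1 R r)) \<le> y * q1 R r - x * q1 R r"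
    using assms by (intro exp_diff_le) (auto intro: mult_right_mono)
  moreover have "exp (- (y * q1 R r)) \<le> exp (- (x * q1 R r))"
    using assms by (auto intro: mult_right_mono)
  ultimately show ?thesis using assms by (simp add: K1_def abs_if algebra_simps)
qed

lemma K1_approx:
  assumes q: "0 < q1 R r" and s: "0 \<le> s" "s \<le> 1/2" and e: "0 < e"
  obtains a b where "0 < a" "a < b" "\<And>k. k \<in> {a..b} \<Longrightarrow> \<bar>K1 R r k - s\<bar> \<le> e"
proof -
  obtain k0 where k0: "0 \<le> k0" "\<bar>K1 R r k0 - s\<bar> \<le> e/2"
  proof (cases "s = 0")
    case True
    define k0 where "k0 = 1 / (q1 R r * e)"
    have "1 + 1/e \<le> exp (1/e)" by (rule exp_ge_add_one_self)
    then have "1/e \<le> exp (1/e)" by linarith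
    then have "exp (-(1/e)) \<le> e" using e by (simp add: exp_minus field_simps)
    moreover have "\<bar>k0\<bar> * q1 R r = 1/e" using q e by (simp add: k0_def)
    ultimately have "K1 R r k0 \<le> e/2" by (simp add: K1_def)
    then show ?thesis using True q e K1_bounds(1)[OF q, of k0]
      by (intro that[of k0]) (auto simp: k0_def)
  next
    case False
    define k0 where "k0 = ln (1 / (2 * s)) / q1 R r"
    have "0 \<le> ln (1 / (2 * s))" using s False by simp
    then have "0 \<le> k0" using q by (simp add: k0_def)
    moreover have "K1 R r k0 = s"
      using \<open>0 \<le> k0\<close> q s False by (simp add: K1_def k0_def exp_minus)
    ultimately show ?thesis using e by (intro that[of k0]) auto
  qed
  define d where "d = e / (2 * q1 R r)"
  have d: "0 < d" using q e by (simp add: d_def)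
  show ?thesis
  proof (rule that[of "k0 + d" "k0 + 2*d"])
    show "0 < k0 + d" "k0 + d < k0 + 2*d" using k0 d by auto
    fix k assume k: "k \<in> {k0 + d..k0 + 2*d}"
    have "\<bar>K1 R r k0 - K1 R r k\<bar> \<le> (k - k0) * q1 R r / 2"
      using k k0 d by (intro K1_lip[OF q]) auto
    also have "\<dots> \<le> (2*d) * q1 R r / 2"
      using k q by (intro divide_right_mono mult_right_mono) auto
    also have "\<dots> = e/2" using q by (simp add: d_def)
    finally show "\<bar>K1 R r k - s\<bar> \<le> e" using k0(2) by linarith
  qed
qed

lemma S1_lower: assumes q: "0 < q1 R r" and "0 < k" "k \<le> b"
  shows "q1 R r * exp (- (b * q1 R r)) / 2 \<le> S1 R r k"
proof -
  let ?u = "k * q1 R r"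
  have "1 + ?u \<le> exp ?u" by (rule exp_ge_add_one_self)
  then have "(1 + ?u) * exp (- ?u) \<le> exp ?u * exp (- ?u)"
    by (intro mult_right_mono) auto
  then have "?u * exp (-?u) \<le> 1 - exp (-?u)" by (simp add: algebra_simps flip: exp_add)
  then have "?u * exp (-?u) / (2*k) \<le> (1 - exp (-?u)) / (2*k)"
    using assms by (intro divide_right_mono) auto
  moreover have "?u * exp (-?u) / (2*k) = q1 R r * exp (-?u) / 2" using assms by simp
  moreover have "exp (- (b * q1 R r)) \<le> exp (-?u)" using assms by (auto intro: mult_right_mono)
  moreover have "S1 R r k = (1 - exp (-?u)) / (2*k)" using assms by (simp add: S1_def)
  ultimately show ?thesis using q by (smt (verit) divide_right_mono mult_left_mono)
qed

lemma S_cont: assumes "0 < a"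
  shows "continuous_on {a..b} (S1 R r)" "continuous_on {a..b} (S2 R r)"
  unfolding S1_def[abs_def] S2_def[abs_def] using assms by (auto intro!: continuous_intros)

lemma int_ind: fixes f :: "real \<Rightarrow> real" assumes "continuous_on {a..b} f"
  shows "integrable lebesgue (\<lambda>k. f k * indicator {a..b} k :: real)"
        "integrable lborel (\<lambda>k. f k * indicator {a..b} k :: real)"
proof -
  have "(\<lambda>x. indicator {a..b} x *\<^sub>R f x) \<in> borel_measurable borel"
    by (rule borel_measurable_continuous_on_indicator) (auto simp: assms intro!: borel_closed)
  then have m: "(\<lambda>k. f k * indicator {a..b} k) \<in> borel_measurable borel"
    by (simp add: mult.commute)
  show i: "integrable lborel (\<lambda>k. f k * indicator {a..b} k :: real)"
    using borel_integrable_atLeastAtMost'[OF assms] by (simp add: set_integrable_def mult.commute)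
  show "integrable lebesgue (\<lambda>k. f k * indicator {a..b} k :: real)"
    using integrable_completion[of "\<lambda>k. f k * indicator {a..b} k" lborel] m i by simp
qed

lemma test_contra:
  assumes q: "0 < q1 R r" and phi: "\<phi> \<in> Kspace R r" and ab: "a < b" and m: "0 < m"
    and low: "\<And>k. m * indicator {a..b} k \<le> wn R r \<phi> k"
    and e: "0 \<le> e"
    and up: "\<And>k. wn R r (\<lambda>k. NP_op R r \<phi> k - (z * fst (\<phi> k), z * snd (\<phi> k))) k \<le> e\<^sup>2 * wn R r \<phi> k"
  shows "np_norm R r (\<lambda>k. NP_op R r \<phi> k - (z * fst (\<phi> k), z * snd (\<phi> k))) \<le> e * np_norm R r \<phi>"
        "0 < np_norm R r \<phi>"
proof -
  let ?\<psi> = "\<lambda>k. NP_op R r \<phi> k - (z * fst (\<phi> k), z * snd (\<phi> k))"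
  have ub1: "cmod (complex_of_real (K1 R r k) - z) \<le> 1/2 + cmod z" and ub2: "cmod (complex_of_real (K2 R r k) - z) \<le> 1/2 + cmod z" for k
    using K_in_I[OF q, of k] norm_triangle_ineq4[of "complex_of_real (K1 R r k)" z] norm_triangle_ineq4[of "complex_of_real (K2 R r k)" z]
    by auto
  have psi: "?\<psi> \<in> Kspace R r"
    unfolding NP_minus by (rule Kspace_mult[OF q phi _ _ ub1 ub2]) measurable
  have iphi: "integrable lebesgue (wn R r \<phi>)" and ipsi: "integrable lebesgue (wn R r ?\<psi>)"
    using phi psi by (auto simp: Kspace_iff)
  have "integral\<^sup>L lebesgue (wn R r ?\<psi>) \<le> e\<^sup>2 * integral\<^sup>L lebesgue (wn R r \<phi>)"
    using integral_mono[OF ipsi integrable_mult_right[OF iphi, of "e\<^sup>2"] up] by simp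
  then have "sqrt (integral\<^sup>L lebesgue (wn R r ?\<psi>)) \<le> sqrt (e\<^sup>2 * integral\<^sup>L lebesgue (wn R r \<phi>))"
    by (rule real_sqrt_le_mono)
  then show "np_norm R r ?\<psi> \<le> e * np_norm R r \<phi>" using e by (simp add: np_norm_wn real_sqrt_mult)
  have mi: "(\<lambda>k. m * indicator {a..b} k :: real) \<in> borel_measurable borel" by measurable
  have il: "integrable lebesgue (\<lambda>k. m * indicator {a..b} k :: real)"
    using int_ind(1)[of a b "\<lambda>_. m"] by simp
  have "integral\<^sup>L lebesgue (\<lambda>k. m * indicator {a..b} k :: real) = integral\<^sup>L lborel (\<lambda>k. m * indicator {a..b} k :: real)"
    using integral_completion[OF mi[simplified measurable_lborel2[symmetric]]] by simp
  also have "\<dots> = m * (b - a)" using ab by simp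
  finally have "m * (b - a) \<le> integral\<^sup>L lebesgue (wn R r \<phi>)"
    using integral_mono[OF il iphi low] ab by simp
  moreover have "0 < m * (b - a)" using m ab by simp
  ultimately show "0 < np_norm R r \<phi>" by (simp add: np_norm_wn)
qed

lemma wn_1: "wn R r (\<lambda>k. (complex_of_real (f k), 0)) k = S1 R r k * (f k)\<^sup>2"
  by (simp add: wn_def)
lemma wn_2: "wn R r (\<lambda>k. (0, complex_of_real (f k))) k = S2 R r k * (f k)\<^sup>2"
  by (simp add: wn_def)

lemma in_spec:
  assumes q: "0 < q1 R r" and t: "t \<in> {-1/2..1/2}"
  shows "complex_of_real t \<in> NP_spectrum R r"
proof -
  let ?z = "complex_of_real t"
  have "False" if c: "c > 0" and bb: "\<forall>\<phi>\<in>Kspace R r.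
        c * np_norm R r \<phi> \<le> np_norm R r (\<lambda>k. NP_op R r \<phi> k - (?z * fst (\<phi> k), ?z * snd (\<phi> k)))" for c
  proof -
    define e where "e = c / 2"
    have e: "0 < e" using c by (simp add: e_def)
    obtain s where s: "0 \<le> s" "s \<le> 1/2" "\<bar>t\<bar> = s" using t by (intro that[of "\<bar>t\<bar>"]) auto
    obtain a b where ab: "0 < a" "a < b" "\<And>k. k \<in> {a..b} \<Longrightarrow> \<bar>K1 R r k - s\<bar> \<le> e"
      using K1_approx[OF q s(1,2) e] by blast
    define m where "m = q1 R r * exp (- (b * q1 R r)) / 2"
    have m: "0 < m" using q by (simp add: m_def)
    have Slow: "m \<le> S1 R r k" "m \<le> S2 R r k" if "k \<in> {a..b}" for k
      using S1_lower[OF q, of k b] that ab S1_le_S2[OF q, of k] by (auto simp: m_def)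
    have ind2: "(indicator {a..b} k :: real)\<^sup>2 = indicator {a..b} k" for k
      by (simp add: indicator_def)
    obtain \<phi> where phi: "\<phi> \<in> Kspace R r" and low: "\<And>k. m * indicator {a..b} k \<le> wn R r \<phi> k"
      and up: "\<And>k. wn R r (\<lambda>k. NP_op R r \<phi> k - (?z * fst (\<phi> k), ?z * snd (\<phi> k))) k \<le> e\<^sup>2 * wn R r \<phi> k"
    proof (cases "0 \<le> t")
      case True
      define \<phi> where "\<phi> = (\<lambda>k. (complex_of_real (indicator {a..b} k), 0::complex))"
      have "\<phi> \<in> Kspace R r"
        unfolding Kspace_iff
      proof
        show "\<phi> \<in> borel_measurable lebesgue" unfolding \<phi>_def by (intro borel_to_leb) measurable
        have "integrable lebesgue (\<lambda>k. S1 R r k * indicator {a..b} k)"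
          by (rule int_ind(1)[OF S_cont(1)[OF ab(1)]])
        then show "integrable lebesgue (wn R r \<phi>)" unfolding \<phi>_def wn_1 ind2 .
      qed
      moreover have "m * indicator {a..b} k \<le> wn R r \<phi> k" for k
        unfolding \<phi>_def wn_1 ind2 using Slow(1)[of k] by (auto simp: indicator_def)
      moreover have "wn R r (\<lambda>k. NP_op R r \<phi> k - (?z * fst (\<phi> k), ?z * snd (\<phi> k))) k \<le> e\<^sup>2 * wn R r \<phi> k" for k
      proof (cases "k \<in> {a..b}")
        case True
        have "\<bar>K1 R r k - t\<bar>\<^sup>2 \<le> e\<^sup>2" using ab(3)[OF True] s \<open>0 \<le> t\<close>
          by (intro power_mono) auto
        then have "S1 R r k * \<bar>K1 R r k - t\<bar>\<^sup>2 \<le> S1 R r k * e\<^sup>2"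
          by (intro mult_left_mono S1_nonneg[OF q])
        then show ?thesis using True unfolding NP_minus \<phi>_def
          by (simp add: wn_def indicator_def flip: of_real_diff) (simp add: algebra_simps)
      qed (simp add: NP_op_def \<phi>_def wn_def)
      ultimately show ?thesis by (rule that)
    next
      case False
      define \<phi> where "\<phi> = (\<lambda>k. (0::complex, complex_of_real (indicator {a..b} k)))"
      have "\<phi> \<in> Kspace R r"
        unfolding Kspace_iff
      proof
        show "\<phi> \<in> borel_measurable lebesgue" unfolding \<phi>_def by (intro borel_to_leb) measurable
        have "integrable lebesgue (\<lambda>k. S2 R r k * indicator {a..b} k)"
          by (rule int_ind(1)[OF S_cont(2)[OF ab(1)]])
        then show "integrable lebesgue (wn R r \<phi>)" unfolding \<phi>_def wn_2 ind2 .
      qed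
      moreover have "m * indicator {a..b} k \<le> wn R r \<phi> k" for k
        unfolding \<phi>_def wn_2 ind2 using Slow(2)[of k] by (auto simp: indicator_def)
      moreover have "wn R r (\<lambda>k. NP_op R r \<phi> k - (?z * fst (\<phi> k), ?z * snd (\<phi> k))) k \<le> e\<^sup>2 * wn R r \<phi> k" for k
      proof (cases "k \<in> {a..b}")
        case True
        have "\<bar>K2 R r k - t\<bar>\<^sup>2 \<le> e\<^sup>2" using ab(3)[OF True] s False
          by (intro power_mono) (auto simp: K2_eq)
        then have "S2 R r k * \<bar>K2 R r k - t\<bar>\<^sup>2 \<le> S2 R r k * e\<^sup>2"
          by (intro mult_left_mono S2_nonneg[OF q])
        then show ?thesis using True unfolding NP_minus \<phi>_def
          by (simp add: wn_def indicator_def flip: of_real_diff) (simp add: algebra_simps)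
      qed (simp add: NP_op_def \<phi>_def wn_def)
      ultimately show ?thesis by (rule that)
    qed
    note tc = test_contra[OF q phi ab(2) m low less_imp_le[OF e] up]
    have "c * np_norm R r \<phi> \<le> e * np_norm R r \<phi>" using bb phi tc(1) by (meson order_trans)
    then show False using tc(2) c by (simp add: e_def)
  qed
  then show ?thesis unfolding NP_spectrum_def by blast
qed

lemma spectrum_eq: assumes q: "0 < q1 R r" shows "NP_spectrum R r = complex_of_real ` {-1/2..1/2}"
  using in_spec[OF q] resolvent[OF q] by blast


lemma h_diff: assumes q: "0 < (q::real)" shows "(\<lambda>y. ln (1 / (2 * y)) / q) differentiable_on {0<..}"
proof -
  have "(\<lambda>y. ln (1 / (2 * y)) / (q::real)) differentiable at y" if "0 < y" for y
  proof -
    have "((\<lambda>y. ln (1 / (2 * y)) / (q::real)) has_real_derivative (inverse (1 / (2 * y)) * (- 2 / (2*y)^2)) / q) (at y)"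
      using that q by (auto intro!: derivative_eq_intros simp: power2_eq_square)
    then show ?thesis using real_differentiable_def
      by (metis has_field_derivative_imp_has_derivative differentiableI)
  qed
  then show ?thesis by (auto simp: differentiable_on_def intro: differentiable_at_withinI)
qed

lemma K1_preimage_negl:
  assumes q: "0 < q1 R r" and N: "negligible N"
  shows "negligible (K1 R r -` N)"
proof -
  define h where "h y = ln (1 / (2 * y)) / q1 R r" for y
  let ?S = "N \<inter> {0<..}"
  have hd: "h differentiable_on ?S" unfolding h_def
    by (rule differentiable_on_subset[OF h_diff[OF q]]) auto
  have hd': "(\<lambda>y. - h y) differentiable_on ?S"
    using hd by (auto simp: differentiable_on_def intro: differentiable_compose derivative_intros)
  have S: "negligible ?S" using N by (rule negligible_subset) auto
  have n1: "negligible (h ` ?S)" by (rule negligible_differentiable_image_negligible[OF order_refl S hd])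
  have n2: "negligible ((\<lambda>y. - h y) ` ?S)" by (rule negligible_differentiable_image_negligible[OF order_refl S hd'])
  have "K1 R r -` N \<subseteq> h ` ?S \<union> (\<lambda>y. - h y) ` ?S"
  proof
    fix k assume k: "k \<in> K1 R r -` N"
    let ?y = "K1 R r k"
    have y: "?y \<in> ?S" using k K1_bounds(1)[OF q, of k] by auto
    have "1 / (2 * ?y) = exp (\<bar>k\<bar> * q1 R r)" by (simp add: K1_def exp_minus inverse_eq_divide)
    then have "h ?y = \<bar>k\<bar>" using q by (simp add: h_def)
    then show "k \<in> h ` ?S \<union> (\<lambda>y. - h y) ` ?S"
      using y by (cases "0 \<le> k") (auto intro!: image_eqI[where x="?y"])
  qed
  then show ?thesis using negligible_Un[OF n1 n2] by (rule negligible_subset[rotated])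
qed

lemma K_preimage_null:
  assumes q: "0 < q1 R r" and N: "N \<in> null_sets lborel"
  shows "K1 R r -` N \<in> null_sets lebesgue" "K2 R r -` N \<in> null_sets lebesgue"
proof -
  have nN: "negligible N" using null_sets_completionI[OF N] by (simp add: negligible_iff_null_sets)
  then show "K1 R r -` N \<in> null_sets lebesgue"
    using K1_preimage_negl[OF q] by (simp add: negligible_iff_null_sets)
  have "negligible (uminus ` N)"
    by (rule negligible_differentiable_image_negligible[OF order_refl nN]) (auto intro!: derivative_intros)
  then have "negligible (K1 R r -` (uminus ` N))" by (rule K1_preimage_negl[OF q])
  moreover have "K1 R r -` (uminus ` N) = K2 R r -` N"
    by (auto simp: K2_eq image_iff) (metis minus_minus)
  ultimately show "K2 R r -` N \<in> null_sets lebesgue" by (simp add: negligible_iff_null_sets)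
qed

definition w1 where "w1 R r \<phi> k = S1 R r k * (cmod (fst (\<phi> k)))\<^sup>2"
definition w2 where "w2 R r \<phi> k = S2 R r k * (cmod (snd (\<phi> k)))\<^sup>2"
definition M1 where "M1 R r \<phi> = distr (density lebesgue (\<lambda>k. ennreal (w1 R r \<phi> k))) borel (K1 R r)"
definition M2 where "M2 R r \<phi> = distr (density lebesgue (\<lambda>k. ennreal (w2 R r \<phi> k))) borel (K2 R r)"
definition nu where "nu R r \<phi> = msum (M1 R r \<phi>) (M2 R r \<phi>)"

lemma sets_M[simp]: "sets (M1 R r \<phi>) = sets borel" "sets (M2 R r \<phi>) = sets borel"
  by (simp_all add: M1_def M2_def)

lemma space_M[simp]: "space (M1 R r \<phi>) = UNIV" "space (M2 R r \<phi>) = UNIV"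
  using sets_eq_imp_space_eq[OF sets_M(1)] sets_eq_imp_space_eq[OF sets_M(2)] by simp_all

lemma sets_nu[simp]: "sets (nu R r \<phi>) = sets borel"
  unfolding nu_def by (subst sets_msum) simp_all

lemma space_nu[simp]: "space (nu R r \<phi>) = UNIV"
  using sets_eq_imp_space_eq[OF sets_nu] by simp

context
  fixes R r :: real and \<phi> :: pairfun
  assumes q: "0 < q1 R r" and phi: "\<phi> \<in> Kspace R r"
begin

lemma phim[measurable]: "\<phi> \<in> borel_measurable lebesgue" using phi by (simp add: Kspace_iff)

lemma wm[measurable]: "w1 R r \<phi> \<in> borel_measurable lebesgue" "w2 R r \<phi> \<in> borel_measurable lebesgue"
  unfolding w1_def[abs_def] w2_def[abs_def] by measurable

lemma w_nonneg: "0 \<le> w1 R r \<phi> k" "0 \<le> w2 R r \<phi> k"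
  using S1_nonneg[OF q] S2_nonneg[OF q] by (simp_all add: w1_def w2_def)

lemma w_int: "integrable lebesgue (w1 R r \<phi>)" "integrable lebesgue (w2 R r \<phi>)"
  using Kspace_parts[OF q phi] by (simp_all add: w1_def[abs_def] w2_def[abs_def])

lemma Km: "K1 R r \<in> density lebesgue (\<lambda>k. ennreal (w1 R r \<phi> k)) \<rightarrow>\<^sub>M borel"
  "K2 R r \<in> density lebesgue (\<lambda>k. ennreal (w2 R r \<phi> k)) \<rightarrow>\<^sub>M borel"
  by (simp_all add: measurable_cong_sets[OF sets_density refl])

lemma pow_bound: "\<bar>a * K ^ n\<bar> \<le> \<bar>a\<bar>" if "K \<in> {-1/2..1/2}" for a K :: real
proof -
  have "\<bar>K\<bar> ^ n \<le> 1" using that by (intro power_le_one) (auto simp: abs_le_iff)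
  then show ?thesis by (simp add: abs_mult power_abs mult_left_le)
qed

lemma M_moments:
  shows "integrable (M1 R r \<phi>) (\<lambda>x. x ^ n)" "integral\<^sup>L (M1 R r \<phi>) (\<lambda>x. x ^ n) = (\<integral>k. w1 R r \<phi> k * K1 R r k ^ n \<partial>lebesgue)"
        "integrable (M2 R r \<phi>) (\<lambda>x. x ^ n)" "integral\<^sup>L (M2 R r \<phi>) (\<lambda>x. x ^ n) = (\<integral>k. w2 R r \<phi> k * K2 R r k ^ n \<partial>lebesgue)"
        "integrable lebesgue (\<lambda>k. w1 R r \<phi> k * K1 R r k ^ n)" "integrable lebesgue (\<lambda>k. w2 R r \<phi> k * K2 R r k ^ n)"
proof -
  show i1: "integrable lebesgue (\<lambda>k. w1 R r \<phi> k * K1 R r k ^ n)"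
    by (rule Bochner_Integration.integrable_bound[OF w_int(1)]) (auto intro!: AE_I2 pow_bound K_in_I[OF q])
  show i2: "integrable lebesgue (\<lambda>k. w2 R r \<phi> k * K2 R r k ^ n)"
    by (rule Bochner_Integration.integrable_bound[OF w_int(2)]) (auto intro!: AE_I2 pow_bound K_in_I[OF q])
  show "integrable (M1 R r \<phi>) (\<lambda>x. x ^ n)"
    unfolding M1_def using i1 w_nonneg
    by (subst integrable_distr_eq[OF Km(1)]) (auto simp: integrable_density)
  show "integrable (M2 R r \<phi>) (\<lambda>x. x ^ n)"
    unfolding M2_def using i2 w_nonneg
    by (subst integrable_distr_eq[OF Km(2)]) (auto simp: integrable_density)
  show "integral\<^sup>L (M1 R r \<phi>) (\<lambda>x. x ^ n) = (\<integral>k. w1 R r \<phi> k * K1 R r k ^ n \<partial>lebesgue)"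
    unfolding M1_def using w_nonneg
    by (subst integral_distr[OF Km(1)]) (auto simp: integral_density)
  show "integral\<^sup>L (M2 R r \<phi>) (\<lambda>x. x ^ n) = (\<integral>k. w2 R r \<phi> k * K2 R r k ^ n \<partial>lebesgue)"
    unfolding M2_def using w_nonneg
    by (subst integral_distr[OF Km(2)]) (auto simp: integral_density)
qed

lemma nu_moments:
  "integrable (nu R r \<phi>) (\<lambda>x. x ^ n)"
  "integral\<^sup>L (nu R r \<phi>) (\<lambda>x. x ^ n) = (\<integral>k. w1 R r \<phi> k * K1 R r k ^ n \<partial>lebesgue) + (\<integral>k. w2 R r \<phi> k * K2 R r k ^ n \<partial>lebesgue)"
  using integrable_msum[of "M2 R r \<phi>" "M1 R r \<phi>" "\<lambda>x. x ^ n"] M_moments unfolding nu_def by simp_all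

lemma np_ip_moment:
  "np_ip R r ((NP_op R r ^^ n) \<phi>) \<phi> = complex_of_real ((\<integral>k. w1 R r \<phi> k * K1 R r k ^ n \<partial>lebesgue) + (\<integral>k. w2 R r \<phi> k * K2 R r k ^ n \<partial>lebesgue))"
proof -
  have "ip_integrand R r ((NP_op R r ^^ n) \<phi>) \<phi> k = complex_of_real (w1 R r \<phi> k * K1 R r k ^ n + w2 R r \<phi> k * K2 R r k ^ n)" for k
  proof -
    have a: "fst (\<phi> k) * cnj (fst (\<phi> k)) = complex_of_real ((cmod (fst (\<phi> k)))\<^sup>2)"
      "snd (\<phi> k) * cnj (snd (\<phi> k)) = complex_of_real ((cmod (snd (\<phi> k)))\<^sup>2)"
      by (rule complex_norm_square[symmetric])+
    show ?thesis unfolding ip_integrand_def NP_pow w1_def w2_def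
      by (simp add: mult.assoc a)
  qed
  then have eq: "ip_integrand R r ((NP_op R r ^^ n) \<phi>) \<phi> = (\<lambda>k. complex_of_real (w1 R r \<phi> k * K1 R r k ^ n + w2 R r \<phi> k * K2 R r k ^ n))"
    by (rule ext)
  have "np_ip R r ((NP_op R r ^^ n) \<phi>) \<phi> = (\<integral>k. complex_of_real (w1 R r \<phi> k * K1 R r k ^ n + w2 R r \<phi> k * K2 R r k ^ n) \<partial>lebesgue)"
    unfolding np_ip_def eq ..
  also have "\<dots> = complex_of_real (\<integral>k. w1 R r \<phi> k * K1 R r k ^ n + w2 R r \<phi> k * K2 R r k ^ n \<partial>lebesgue)"
    by (rule integral_complex_of_real)
  also have "(\<integral>k. w1 R r \<phi> k * K1 R r k ^ n + w2 R r \<phi> k * K2 R r k ^ n \<partial>lebesgue) = (\<integral>k. w1 R r \<phi> k * K1 R r k ^ n \<partial>lebesgue) + (\<integral>k. w2 R r \<phi> k * K2 R r k ^ n \<partial>lebesgue)"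
    by (rule Bochner_Integration.integral_add[OF M_moments(5) M_moments(6)])
  finally show ?thesis .
qed

lemma nu_finite: "finite_measure (nu R r \<phi>)"
proof
  have e: "emeasure (M1 R r \<phi>) UNIV = ennreal (integral\<^sup>L lebesgue (w1 R r \<phi>))"
    "emeasure (M2 R r \<phi>) UNIV = ennreal (integral\<^sup>L lebesgue (w2 R r \<phi>))"
    unfolding M1_def M2_def using w_int w_nonneg
    by (simp_all add: emeasure_distr[OF Km(1)] emeasure_distr[OF Km(2)] emeasure_density nn_integral_eq_integral)
  show "emeasure (nu R r \<phi>) (space (nu R r \<phi>)) \<noteq> \<infinity>"
    unfolding nu_def using e by (simp add: emeasure_msum[of "M2 R r \<phi>" "M1 R r \<phi>"])
qed

lemma nu_conc: "AE x in nu R r \<phi>. \<bar>x\<bar> \<le> 1/2"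
proof (rule AE_I')
  let ?B = "{x::real. \<not> \<bar>x\<bar> \<le> 1/2}"
  have B: "?B \<in> sets borel" by measurable
  have a1: "\<bar>K1 R r k\<bar> \<le> 1/2" and a2: "\<bar>K2 R r k\<bar> \<le> 1/2" for k
    using K_in_I(1)[OF q, of k] K_in_I(2)[OF q, of k] by (auto simp: abs_le_iff)
  have p1: "\<bar>K1 R r k\<bar> * 2 \<le> 1" and p2: "\<bar>K2 R r k\<bar> * 2 \<le> 1" for k using a1[of k] a2[of k] by auto
  have "emeasure (M1 R r \<phi>) ?B = 0" "emeasure (M2 R r \<phi>) ?B = 0"
    unfolding M1_def M2_def using B
    by (simp_all add: emeasure_distr[OF Km(1)] emeasure_distr[OF Km(2)] p1 p2)
  then have "emeasure (nu R r \<phi>) ?B = 0" unfolding nu_def using B by (simp add: emeasure_msum[of "M2 R r \<phi>" "M1 R r \<phi>"])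
  then show "?B \<in> null_sets (nu R r \<phi>)" using B by (simp add: null_sets_def)
qed auto

lemma nu_ac: "absolutely_continuous lborel (nu R r \<phi>)"
  unfolding absolutely_continuous_def
proof
  fix N :: "real set" assume N: "N \<in> null_sets lborel"
  then have Nb: "N \<in> sets borel" by (simp add: null_sets_def)
  have z: "emeasure (density lebesgue (\<lambda>k. ennreal (w k))) A = 0"
    if "A \<in> null_sets lebesgue" "w \<in> borel_measurable lebesgue" for w A
  proof -
    have "A \<in> null_sets (density lebesgue (\<lambda>k. ennreal (w k)))"
      using that by (subst null_sets_density_iff) (auto intro: eventually_mono[OF AE_not_in[OF that(1)]])
    then show ?thesis by auto
  qed
  have "emeasure (M1 R r \<phi>) N = 0" "emeasure (M2 R r \<phi>) N = 0"
    unfolding M1_def M2_def using Nb K_preimage_null[OF q N]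
    by (simp_all add: emeasure_distr[OF Km(1)] emeasure_distr[OF Km(2)] z)
  then have "emeasure (nu R r \<phi>) N = 0" unfolding nu_def using Nb by (simp add: emeasure_msum[of "M2 R r \<phi>" "M1 R r \<phi>"])
  then show "N \<in> null_sets (nu R r \<phi>)" using Nb by (simp add: null_sets_def)
qed

lemma nu_spectral: "is_spectral_measure R r \<phi> (nu R r \<phi>)"
  unfolding is_spectral_measure_def using nu_finite nu_moments np_ip_moment by simp

lemma spectral_unique: assumes "is_spectral_measure R r \<phi> \<mu>" shows "\<mu> = nu R r \<phi>"
proof -
  have tm: "two_meas \<mu> (nu R r \<phi>)"
    unfolding two_meas_def
  proof (intro conjI allI)
    show "finite_measure \<mu>" "sets \<mu> = sets borel" "integrable \<mu> (\<lambda>x. x ^ n)" for n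
      using assms by (auto simp: is_spectral_measure_def)
    show "finite_measure (nu R r \<phi>)" by (rule nu_finite)
    show "sets (nu R r \<phi>) = sets borel" by simp
    show "AE x in nu R r \<phi>. \<bar>x\<bar> \<le> 1/2" by (rule nu_conc)
    show "integrable (nu R r \<phi>) (\<lambda>x. x ^ n)" for n by (rule nu_moments)
    fix n
    have "complex_of_real (\<integral>x. x ^ n \<partial>\<mu>) = complex_of_real (\<integral>x. x ^ n \<partial>nu R r \<phi>)"
      using assms nu_spectral by (simp add: is_spectral_measure_def)
    then show "(\<integral>x. x ^ n \<partial>\<mu>) = (\<integral>x. x ^ n \<partial>nu R r \<phi>)" by simp
  qed
  show ?thesis by (rule two_meas.meas_eq[OF tm])
qed

end

lemma purely_ac: assumes q: "0 < q1 R r" shows "NP_purely_ac R r"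
  unfolding NP_purely_ac_def
proof (intro ballI conjI allI impI)
  fix \<phi> assume phi: "\<phi> \<in> Kspace R r"
  show "\<exists>\<mu>. is_spectral_measure R r \<phi> \<mu>" using nu_spectral[OF q phi] by blast
  fix \<mu> assume "is_spectral_measure R r \<phi> \<mu>"
  then have "\<mu> = nu R r \<phi>" by (rule spectral_unique[OF q phi])
  then show "absolutely_continuous lborel \<mu>" using nu_ac[OF q phi] by simp
qed


theorem theorem4p6:
  fixes R r :: real
  assumes "R > 0" and "r > 0"
  shows "NP_purely_ac R r \<and> NP_spectrum R r = complex_of_real ` {-1/2..1/2}"
  using purely_ac[OF q1_pos[OF assms]] spectrum_eq[OF q1_pos[OF assms]] by simp

end
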